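(* Let $\mathbf i$ be a reduced expression of $w_0$ whose standard seed satisfies properties (A), (B) and (C). Then for every $i,j\in J_{ex}(\mathbf i)$: if $i>j$ then $(\beta_i;P_j)=0$, and $(\beta_i;P_i)=1$.
   Context: $\mathfrak g$ is a complex simple Lie algebra of simply-laced type, vertex set $I=\{1,\dots,n\}$, Cartan entries $i\cdot j$, Weyl group with simple reflections $s_i$, longest element $w_0$, $N=\ell(w_0)$, fundamental weights $\omega_i$. $\overline D:\mathbb C[\mathsf N]\to\mathbb C(\alpha_1,\dots,\alpha_n)$ is the algebra morphism $\overline D(f)=\sum_{\mathbf j}(f,e_{j_1}\cdots e_{j_r})\big(\alpha_{j_1}(\alpha_{j_1}+\alpha_{j_2})\cdots(\alpha_{j_1}+\dots+\alpha_{j_r})\big)^{-1}$ ($\mathbb C[\mathsf N]$ identified with the graded dual of $U(\mathfrak n)$, $e_i$ Chevalley generators, $\alpha_i$ indeterminates). Positive roots are linear forms in the $\alpha_i$; $(\beta;P)$ = multiplicity of $\beta$ in $P$. For a reduced expression $\mathbf i$: $\beta_j=s_{i_1}\cdots s_{i_{j-1}}(\alpha_{i_j})$; $j_-(\mathbf i)=\max(\{l<j:i_l=i_j\}\cup\{0\})$; $j_+(\mathbf i)=\min(\{l>j:i_l=i_j\}\cup\{N+1\})$; $J_{ex}(\mathbf i)=\{j:j_+(\mathbf i)\le N\}$; flag minors $x_j=D(s_{i_1}\cdots s_{i_j}\omega_{i_j},\omega_{i_j})$ (unipotent minors). Properties: (A) $\overline D(x_j)=1/P_j$ with $P_j$ a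 product of positive roots, for all $j$; (B) $P_jP_{j_-}=\beta_j\prod_{l<j<l_+,\,i_l\cdot i_j=-1}P_l$ for all $j$, with $P_0=1$; (C) $(\beta_i;P_j)-(\beta_i;P_{j_+})\le1$ for all $j\in J_{ex}$, $1\le i\le N$. *)

theory Defs
  imports Complex_Main "HOL-Library.Multiset"
begin

text \<open>Root lattice: vectors of integer coefficients on the simple roots, indexed by the
vertex set {1..n}; a vector v stands for the linear form sum_k v k * alpha_k.
The Cartan matrix is C :: nat => nat => int, with C i j the entry i . j.\<close>

type_synonym rootvec = "nat \<Rightarrow> int"

definition simply_laced_simple_cartan :: "nat \<Rightarrow> (nat \<Rightarrow> nat \<Rightarrow> int) \<Rightarrow> bool" where
  "simply_laced_simple_cartan n C \<longleftrightarrow>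
     n \<ge> 1 \<and>
     (\<forall>i\<in>{1..n}. C i i = 2) \<and>
     (\<forall>i\<in>{1..n}. \<forall>j\<in>{1..n}. i \<noteq> j \<longrightarrow> C i j \<in> {0, -1}) \<and>
     (\<forall>i\<in>{1..n}. \<forall>j\<in>{1..n}. C i j = C j i) \<and>
     (\<forall>v :: nat \<Rightarrow> real. (\<exists>k\<in>{1..n}. v k \<noteq> 0) \<longrightarrow>
        (\<Sum>a\<in>{1..n}. \<Sum>b\<in>{1..n}. v a * of_int (C a b) * v b) > 0) \<and>
     (\<forall>i\<in>{1..n}. \<forall>j\<in>{1..n}.
        (i, j) \<in> ({(a, b). a \<in> {1..n} \<and> b \<in> {1..n} \<and> C a b = -1})\<^sup>*)"

definition simple_root :: "nat \<Rightarrow> rootvec" where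
  "simple_root i = (\<lambda>k. if k = i then 1 else 0)"

text \<open>Simple reflection s_i(v) = v - (v . alpha_i) alpha_i.\<close>
definition sref :: "nat \<Rightarrow> (nat \<Rightarrow> nat \<Rightarrow> int) \<Rightarrow> nat \<Rightarrow> rootvec \<Rightarrow> rootvec" where
  "sref n C i v = (\<lambda>k. v k - (if k = i then (\<Sum>a\<in>{1..n}. v a * C a i) else 0))"

fun wprod :: "nat \<Rightarrow> (nat \<Rightarrow> nat \<Rightarrow> int) \<Rightarrow> nat list \<Rightarrow> rootvec \<Rightarrow> rootvec" where
  "wprod n C [] = id"
| "wprod n C (a # ws) = sref n C a \<circ> wprod n C ws"

definition weyl_group :: "nat \<Rightarrow> (nat \<Rightarrow> nat \<Rightarrow> int) \<Rightarrow> (rootvec \<Rightarrow> rootvec) set" where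
  "weyl_group n C = {wprod n C ws | ws. set ws \<subseteq> {1..n}}"

definition wlen :: "nat \<Rightarrow> (nat \<Rightarrow> nat \<Rightarrow> int) \<Rightarrow> (rootvec \<Rightarrow> rootvec) \<Rightarrow> nat" where
  "wlen n C w = (LEAST k. \<exists>ws. set ws \<subseteq> {1..n} \<and> length ws = k \<and> wprod n C ws = w)"

definition reduced_expr_w0 :: "nat \<Rightarrow> (nat \<Rightarrow> nat \<Rightarrow> int) \<Rightarrow> nat list \<Rightarrow> bool" where
  "reduced_expr_w0 n C ws \<longleftrightarrow>
     set ws \<subseteq> {1..n} \<and>
     length ws = wlen n C (wprod n C ws) \<and>
     (\<forall>w\<in>weyl_group n C. wlen n C w \<le> wlen n C (wprod n C ws))"

definition positive_roots :: "nat \<Rightarrow> (nat \<Rightarrow> nat \<Rightarrow> int) \<Rightarrow> rootvec set" where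
  "positive_roots n C = {v. (\<exists>w\<in>weyl_group n C. \<exists>i\<in>{1..n}. v = w (simple_root i)) \<and> (\<forall>k. v k \<ge> 0)}"

text \<open>Letters of the word, 1-indexed: i_j.\<close>
definition letter :: "nat list \<Rightarrow> nat \<Rightarrow> nat" where
  "letter ws j = ws ! (j - 1)"

definition beta :: "nat \<Rightarrow> (nat \<Rightarrow> nat \<Rightarrow> int) \<Rightarrow> nat list \<Rightarrow> nat \<Rightarrow> rootvec" where
  "beta n C ws j = wprod n C (take (j - 1) ws) (simple_root (letter ws j))"

definition jminus :: "nat list \<Rightarrow> nat \<Rightarrow> nat" where
  "jminus ws j = Max ({l. 1 \<le> l \<and> l < j \<and> letter ws l = letter ws j} \<union> {0})"

definition jplus :: "nat list \<Rightarrow> nat \<Rightarrow> nat" where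
  "jplus ws j = Min ({l. j < l \<and> l \<le> length ws \<and> letter ws l = letter ws j} \<union> {length ws + 1})"

definition J_ex :: "nat list \<Rightarrow> nat set" where
  "J_ex ws = {j. 1 \<le> j \<and> j \<le> length ws \<and> jplus ws j \<le> length ws}"

text \<open>Property (A) (the part expressible without the map D-bar): each P_j is a
(multiset) product of positive roots.\<close>
definition propA :: "nat \<Rightarrow> (nat \<Rightarrow> nat \<Rightarrow> int) \<Rightarrow> nat list \<Rightarrow> (nat \<Rightarrow> rootvec multiset) \<Rightarrow> bool" where
  "propA n C ws P \<longleftrightarrow> (\<forall>j\<in>{1..length ws}. set_mset (P j) \<subseteq> positive_roots n C)"

definition propB :: "nat \<Rightarrow> (nat \<Rightarrow> nat \<Rightarrow> int) \<Rightarrow> nat list \<Rightarrow> (nat \<Rightarrow> rootvec multiset) \<Rightarrow> bool" where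
  "propB n C ws P \<longleftrightarrow> P 0 = {#} \<and>
     (\<forall>j\<in>{1..length ws}. P j + P (jminus ws j) =
        {# beta n C ws j #} +
        (\<Sum>l\<in>{l. 1 \<le> l \<and> l < j \<and> j < jplus ws l \<and> C (letter ws l) (letter ws j) = -1}. P l))"

definition propC :: "nat \<Rightarrow> (nat \<Rightarrow> nat \<Rightarrow> int) \<Rightarrow> nat list \<Rightarrow> (nat \<Rightarrow> rootvec multiset) \<Rightarrow> bool" where
  "propC n C ws P \<longleftrightarrow> (\<forall>j\<in>J_ex ws. \<forall>i\<in>{1..length ws}.
      int (count (P j) (beta n C ws i)) - int (count (P (jplus ws j)) (beta n C ws i)) \<le> 1)"

end

theory Submission
  imports Defs
begin

definition bf :: "nat \<Rightarrow> (nat \<Rightarrow> nat \<Rightarrow> int) \<Rightarrow> rootvec \<Rightarrow> rootvec \<Rightarrow> int" where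
  "bf n C u v = (\<Sum>a\<in>{1..n}. \<Sum>b\<in>{1..n}. u a * C a b * v b)"

lemma sd: "finite A \<Longrightarrow> (\<Sum>a\<in>A. (if a = i then 1 else 0) * (f a::int)) = (if i \<in> A then f i else 0)"
  by (simp add: if_distrib[of "\<lambda>x. x * _"] sum.delta' cong: if_cong)
lemma sd2: "finite A \<Longrightarrow> (\<Sum>a\<in>A. f a * (if a = i then 1 else 0) :: int) = (if i \<in> A then f i else 0)"
  by (simp add: if_distrib sum.delta' cong: if_cong)

lemma bf_simple: "m \<in> {1..n} \<Longrightarrow> bf n C v (simple_root m) = (\<Sum>a\<in>{1..n}. v a * C a m)"
  unfolding bf_def simple_root_def by (simp add: sd2)

lemma bf_lin1: "bf n C (\<lambda>k. u k - c * x k) v = bf n C u v - c * bf n C x v"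
  unfolding bf_def by (simp add: algebra_simps sum_subtractf sum_distrib_left)

lemma bf_lin2: "bf n C u (\<lambda>k. v k - c * x k) = bf n C u v - c * bf n C u x"
  unfolding bf_def by (simp add: algebra_simps sum_subtractf sum_distrib_left)

lemma bf_neg2: "bf n C u (\<lambda>k. - v k) = - bf n C u v"
  unfolding bf_def by (simp add: sum_negf)

lemma bf_sym: assumes "\<forall>i\<in>{1..n}. \<forall>j\<in>{1..n}. C i j = C j i"
  shows "bf n C u v = bf n C v u"
  unfolding bf_def
  apply (subst sum.swap)
  apply (intro sum.cong refl)
  using assms by (simp add: algebra_simps)

lemma sref_alt: "i \<in> {1..n} \<Longrightarrow>
   sref n C i v = (\<lambda>k. v k - bf n C v (simple_root i) * simple_root i k)"
proof -
  assume i: "i \<in> {1..n}"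
  have b: "bf n C v (simple_root i) = (\<Sum>a\<in>{1..n}. v a * C a i)" using bf_simple[OF i] .
  show ?thesis unfolding sref_def b by (rule ext) (simp add: simple_root_def)
qed

lemma bf_ee: "i \<in> {1..n} \<Longrightarrow> C i i = 2 \<Longrightarrow> bf n C (simple_root i) (simple_root i) = 2"
  by (simp add: bf_simple) (simp add: simple_root_def sd)

locale cart =
  fixes n :: nat and C :: "nat \<Rightarrow> nat \<Rightarrow> int"
  assumes diag: "\<forall>i\<in>{1..n}. C i i = 2"
    and sym: "\<forall>i\<in>{1..n}. \<forall>j\<in>{1..n}. C i j = C j i"
begin

lemma sref_inv:
  assumes i: "i \<in> {1..n}"
  shows "bf n C (sref n C i u) (sref n C i v) = bf n C u v"
proof -
  have ee: "bf n C (simple_root i) (simple_root i) = 2" using bf_ee i diag by blast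
  have s: "bf n C (simple_root i) v = bf n C v (simple_root i)" using bf_sym sym by blast
  show ?thesis unfolding sref_alt[OF i]
    by (simp only: bf_lin1 bf_lin2 ee s) (simp add: algebra_simps)
qed

lemma sref_lin:
  assumes i: "i \<in> {1..n}"
  shows "sref n C i (\<lambda>k. u k - c * x k) = (\<lambda>k. sref n C i u k - c * sref n C i x k)"
  unfolding sref_alt[OF i] by (rule ext) (simp add: bf_lin1 algebra_simps)

lemma sref_invol:
  assumes i: "i \<in> {1..n}"
  shows "sref n C i (sref n C i v) = v"
proof -
  have ee: "bf n C (simple_root i) (simple_root i) = 2" using bf_ee i diag by blast
  show ?thesis unfolding sref_alt[OF i]
    by (rule ext) (simp only: bf_lin1 ee, simp add: algebra_simps)
qed

lemma sref_ee:
  assumes i: "i \<in> {1..n}"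
  shows "sref n C i (simple_root i) = (\<lambda>k. - simple_root i k)"
proof -
  have ee: "bf n C (simple_root i) (simple_root i) = 2" using bf_ee i diag by blast
  show ?thesis unfolding sref_alt[OF i] by (rule ext) (simp add: ee)
qed

lemma wprod_lin: "set ws \<subseteq> {1..n} \<Longrightarrow>
   wprod n C ws (\<lambda>k. u k - c * x k) = (\<lambda>k. wprod n C ws u k - c * wprod n C ws x k)"
  by (induction ws) (auto simp: sref_lin)

lemma wprod_inv: "set ws \<subseteq> {1..n} \<Longrightarrow>
   bf n C (wprod n C ws u) (wprod n C ws v) = bf n C u v"
  by (induction ws) (auto simp: sref_inv)

lemma wprod_inj: "set ws \<subseteq> {1..n} \<Longrightarrow> inj (wprod n C ws)"
proof (induction ws)
  case Nil then show ?case by simp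
next
  case (Cons a ws)
  have "inj (sref n C a)" using Cons.prems sref_invol by (metis inj_on_inverseI insert_subset list.simps(15))
  moreover have "inj (wprod n C ws)" using Cons by simp
  ultimately show ?case using inj_compose by (metis wprod.simps(2))
qed

lemma comm:
  assumes p: "p \<in> {1..n}" and m: "m \<in> {1..n}" and U: "set U \<subseteq> {1..n}"
    and h: "wprod n C U (simple_root m) = (\<lambda>k. - simple_root p k)"
  shows "sref n C p \<circ> wprod n C U = wprod n C U \<circ> sref n C m"
proof (rule ext)
  fix v
  have ep: "simple_root p = (\<lambda>k. - wprod n C U (simple_root m) k)" using h by auto
  have "bf n C (wprod n C U v) (simple_root p) = - bf n C v (simple_root m)"
    by (subst ep, simp only: bf_neg2 wprod_inv[OF U])
  then show "(sref n C p \<circ> wprod n C U) v = (wprod n C U \<circ> sref n C m) v"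
    unfolding comp_def sref_alt[OF p] sref_alt[OF m] wprod_lin[OF U] h by auto
qed

end

lemma wprod_append: "wprod n C (xs @ ys) = wprod n C xs \<circ> wprod n C ys"
  by (induction xs) auto

lemma wlen_le: "set ws' \<subseteq> {1..n} \<Longrightarrow> wlen n C (wprod n C ws') \<le> length ws'"
  unfolding wlen_def by (rule Least_le) blast

lemma (in cart) beta_distinct:
  assumes S: "set ws \<subseteq> {1..n}" and L: "length ws = wlen n C (wprod n C ws)"
    and k: "1 \<le> k" "k < i" "i \<le> length ws"
  shows "beta n C ws k \<noteq> beta n C ws i"
proof
  assume eq: "beta n C ws k = beta n C ws i"
  define A where "A = take (k-1) ws"
  define p where "p = ws ! (k-1)"
  define U where "U = take (i-1-k) (drop k ws)"
  define m where "m = ws ! (i-1)"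
  define R where "R = drop i ws"
  have dec: "ws = A @ p # U @ m # R"
  proof -
    have 1: "ws = take (k-1) ws @ drop (k-1) ws" by simp
    have "k-1 < length ws" using k by simp
    from Cons_nth_drop_Suc[OF this] have 2: "drop (k-1) ws = ws!(k-1) # drop k ws"
      using k by simp
    have 3: "drop k ws = take (i-1-k) (drop k ws) @ drop (i-1-k) (drop k ws)" by (rule append_take_drop_id[symmetric])
    have 4: "drop (i-1-k) (drop k ws) = drop (i-1) ws" using k by simp
    have "i-1 < length ws" using k by simp
    from Cons_nth_drop_Suc[OF this] have 5: "drop (i-1) ws = ws!(i-1) # drop i ws"
      using k by simp
    have 7: "ws = take (k-1) ws @ ws!(k-1) # drop k ws" using 1[unfolded 2] .
    have 8: "drop k ws = take (i-1-k) (drop k ws) @ ws!(i-1) # drop i ws" using 3[unfolded 4 5] .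
    have 9: "ws!(k-1) # drop k ws = ws!(k-1) # (take (i-1-k) (drop k ws) @ ws!(i-1) # drop i ws)"
      using 8 by (rule arg_cong)
    have "ws = take (k-1) ws @ ws!(k-1) # (take (i-1-k) (drop k ws) @ ws!(i-1) # drop i ws)"
      using 7 9 by (metis (no_types))
    then show ?thesis unfolding A_def p_def U_def m_def R_def .
  qed
  have tk: "take (k-1) ws = A" by (simp add: A_def)
  have ti: "take (i-1) ws = A @ p # U"
  proof -
    have "length (A @ p # U) = i - 1" unfolding A_def U_def using k by auto
    then have len: "i - 1 = length (A @ p # U)" by simp
    have ws': "ws = (A @ p # U) @ m # R" using dec by simp
    have "take (i-1) ws = take (length (A @ p # U)) ((A @ p # U) @ m # R)"
      by (simp only: len ws'[symmetric])
    also have "\<dots> = A @ p # U" by simp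
    finally show ?thesis .
  qed
  have SA: "set A \<subseteq> {1..n}" and Sp: "p \<in> {1..n}" and SU: "set U \<subseteq> {1..n}"
    and Sm: "m \<in> {1..n}" and SR: "set R \<subseteq> {1..n}" proof -
    have "set (A @ p # U @ m # R) \<subseteq> {1..n}" using S dec by simp
    then show "set A \<subseteq> {1..n}" "p \<in> {1..n}" "set U \<subseteq> {1..n}" "m \<in> {1..n}" "set R \<subseteq> {1..n}"
      by (simp_all only: set_append set_simps Un_subset_iff insert_subset)
  qed
  have lk: "letter ws k = p" unfolding letter_def p_def by simp
  have li: "letter ws i = m" unfolding letter_def m_def by simp
  have "wprod n C A (simple_root p) = wprod n C A (sref n C p (wprod n C U (simple_root m)))"
    using eq unfolding beta_def tk ti lk li by (simp add: wprod_append)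
  then have "simple_root p = sref n C p (wprod n C U (simple_root m))"
    using wprod_inj[OF SA] by (meson injD)
  then have "sref n C p (simple_root p) = wprod n C U (simple_root m)"
    using sref_invol[OF Sp] by metis
  then have h: "wprod n C U (simple_root m) = (\<lambda>k. - simple_root p k)"
    using sref_ee[OF Sp] by simp
  have c: "sref n C p \<circ> wprod n C U = wprod n C U \<circ> sref n C m" using comm[OF Sp Sm SU h] .
  have "wprod n C (p # U @ [m]) = wprod n C U"
  proof (rule ext)
    fix v
    have "wprod n C (p # U @ [m]) v = (sref n C p \<circ> wprod n C U) (sref n C m v)"
      by (simp add: wprod_append)
    also have "\<dots> = wprod n C U v" unfolding c by (simp add: sref_invol[OF Sm])
    finally show "wprod n C (p # U @ [m]) v = wprod n C U v" .
  qed
  then have "wprod n C ws = wprod n C (A @ U @ R)"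
  proof -
    assume e: "wprod n C (p # U @ [m]) = wprod n C U"
    have "wprod n C ws = wprod n C A \<circ> wprod n C (p # U @ [m]) \<circ> wprod n C R"
      by (subst dec) (simp add: wprod_append comp_assoc)
    also have "\<dots> = wprod n C (A @ U @ R)" by (simp only: e wprod_append comp_assoc)
    finally show ?thesis .
  qed
  moreover have "set (A @ U @ R) \<subseteq> {1..n}" using SA SU SR by auto
  ultimately have "wlen n C (wprod n C ws) \<le> length (A @ U @ R)" using wlen_le[of "A @ U @ R" n C] by simp
  moreover have "length ws = length (A @ U @ R) + 2" by (subst dec) simp
  ultimately show False using L by simp
qed

lemma jminus_less: "1 \<le> j \<Longrightarrow> jminus ws j < j"
  unfolding jminus_def
  by (subst Max_less_iff) (auto intro: finite_subset[of _ "{..<j}"])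

lemma support:
  assumes B: "propB n C ws P"
  shows "j \<le> length ws \<Longrightarrow> x \<in># P j \<Longrightarrow> \<exists>k. 1 \<le> k \<and> k \<le> j \<and> x = beta n C ws k"
proof (induction j arbitrary: x rule: less_induct)
  case (less j)
  show ?case
  proof (cases "j = 0")
    case True then show ?thesis using B less.prems unfolding propB_def by simp
  next
    case False
    define S where "S = {l. 1 \<le> l \<and> l < j \<and> j < jplus ws l \<and> C (letter ws l) (letter ws j) = -1}"
    have fin: "finite S" unfolding S_def by (rule finite_subset[of _ "{..<j}"]) auto
    have "P j + P (jminus ws j) = {# beta n C ws j #} + (\<Sum>l\<in>S. P l)"
      using B False less.prems unfolding propB_def S_def by auto
    then have "x \<in># {# beta n C ws j #} + (\<Sum>l\<in>S. P l)" using less.prems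
      by (metis union_iff)
    then have "x = beta n C ws j \<or> (\<exists>l\<in>S. x \<in># P l)"
    proof -
      assume h: "x \<in># {# beta n C ws j #} + (\<Sum>l\<in>S. P l)"
      have "set_mset (\<Sum>l\<in>S. P l) = (\<Union>l\<in>S. set_mset (P l))" using set_mset_sum[OF fin] .
      then show ?thesis using h by auto
    qed
    then show ?thesis
    proof
      assume "x = beta n C ws j" then show ?thesis using False by (intro exI[of _ j]) auto
    next
      assume "\<exists>l\<in>S. x \<in># P l"
      then obtain l where l: "l \<in> S" "x \<in># P l" by blast
      then have "l < j" unfolding S_def by auto
      then show ?thesis using less.IH[of l x] l less.prems by fastforce
    qed
  qed
qed

theorem lemma6p5:
  fixes n :: nat and C :: "nat \<Rightarrow> nat \<Rightarrow> int" and ws :: "nat list"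
    and P :: "nat \<Rightarrow> rootvec multiset"
  assumes "simply_laced_simple_cartan n C"
    and "reduced_expr_w0 n C ws"
    and "propA n C ws P" and "propB n C ws P" and "propC n C ws P"
  shows "(\<forall>i\<in>J_ex ws. \<forall>j\<in>J_ex ws. i > j \<longrightarrow> count (P j) (beta n C ws i) = 0)
       \<and> (\<forall>i\<in>J_ex ws. count (P i) (beta n C ws i) = 1)"
proof -
  interpret cart n C using assms(1) unfolding simply_laced_simple_cartan_def cart_def by blast
  have S: "set ws \<subseteq> {1..n}" and L: "length ws = wlen n C (wprod n C ws)"
    using assms(2) unfolding reduced_expr_w0_def by auto
  have zero: "count (P j) (beta n C ws i) = 0" if "1 \<le> i" "i \<le> length ws" "j < i" for i j
  proof (rule ccontr)
    assume "count (P j) (beta n C ws i) \<noteq> 0"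
    then have mem: "beta n C ws i \<in># P j" by (simp add: not_in_iff)
    have jl: "j \<le> length ws" using that by simp
    obtain k where "1 \<le> k" "k \<le> j" "beta n C ws i = beta n C ws k"
      using support[OF assms(4) jl mem] by blast
    then show False using beta_distinct[OF S L, of k i] that by auto
  qed
  have one: "count (P i) (beta n C ws i) = 1" if "1 \<le> i" "i \<le> length ws" for i
  proof -
    define S where "S = {l. 1 \<le> l \<and> l < i \<and> i < jplus ws l \<and> C (letter ws l) (letter ws i) = -1}"
    have h: "P i + P (jminus ws i) = {# beta n C ws i #} + (\<Sum>l\<in>S. P l)"
      using assms(4) that unfolding propB_def S_def by auto
    have "count (P i) (beta n C ws i) + count (P (jminus ws i)) (beta n C ws i)
       = 1 + (\<Sum>l\<in>S. count (P l) (beta n C ws i))"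
      using arg_cong[OF h, of "\<lambda>M. count M (beta n C ws i)"] by (simp add: count_sum)
    moreover have "count (P (jminus ws i)) (beta n C ws i) = 0"
      using zero that jminus_less by blast
    moreover have "(\<Sum>l\<in>S. count (P l) (beta n C ws i)) = 0"
      using zero that unfolding S_def by (intro sum.neutral) auto
    ultimately show ?thesis by simp
  qed
  show ?thesis using zero one unfolding J_ex_def by auto
qed

end
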